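(* Let $n_*>2$ be an integer, $\phi(b)=\upsilon\log b\,[\log\log b]^{1+\varepsilon}$ ($b\ge n_*+1$) with $\upsilon,\varepsilon>0$ such that $\phi(n_*+1)>1$, and $\mathsf{G}\in\mathbb{G}(n_*,\phi)$. Then for every $\theta>0$ there exists $a>0$ (possibly depending on $\theta,n_*,\upsilon,\varepsilon$) such that for every $x\in\mathsf{V}$ there exists $N_x\in\mathbb{N}$ with $$G_\theta(N,x):=\sum_{y\in\mathsf{S}(N,x)}[n(y)]^{1+\theta}\le\exp(aN)\quad\text{for all } N\ge N_x,$$ where $\mathsf{S}(N,x)=\{y\in\mathsf{V}:\rho(x,y)=N\}$.
   Context: $\mathsf{G}=(\mathsf{V},\mathsf{E})$ is a countable, connected, locally finite undirected graph; $n(x)$ is the degree, $\rho$ the path distance. For integer $n_*>2$, $\mathsf{V}_*=\{x:n(x)\le n_*\}$, $\mathsf{V}_*^c=\mathsf{V}\setminus\mathsf{V}_*$. For strictly increasing $\phi:(n_*,+\infty)\to(0,+\infty)$, $\mathbb{G}(n_*,\phi)$ is the family of graphs with $\rho(x,y)\ge\phi[\max\{n(x),n(y)\}]$ for all $x,y\in\mathsf{V}_*^c$. *)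

theory Defs
  imports "HOL-Analysis.Analysis"
begin

definition graph_ok :: "'v set \<Rightarrow> ('v \<Rightarrow> 'v \<Rightarrow> bool) \<Rightarrow> bool" where
  "graph_ok V E \<longleftrightarrow>
     countable V \<and>
     (\<forall>x y. E x y \<longrightarrow> x \<in> V \<and> y \<in> V) \<and>
     (\<forall>x y. E x y \<longrightarrow> E y x) \<and>
     (\<forall>x. \<not> E x x) \<and>
     (\<forall>x\<in>V. finite {y. E x y}) \<and>
     (\<forall>x\<in>V. \<forall>y\<in>V. E\<^sup>*\<^sup>* x y)"

definition deg :: "('v \<Rightarrow> 'v \<Rightarrow> bool) \<Rightarrow> 'v \<Rightarrow> nat" where
  "deg E x = card {y. E x y}"

definition gdist :: "('v \<Rightarrow> 'v \<Rightarrow> bool) \<Rightarrow> 'v \<Rightarrow> 'v \<Rightarrow> nat" where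
  "gdist E x y = (LEAST n. (E ^^ n) x y)"

definition sphere :: "'v set \<Rightarrow> ('v \<Rightarrow> 'v \<Rightarrow> bool) \<Rightarrow> nat \<Rightarrow> 'v \<Rightarrow> 'v set" where
  "sphere V E N x = {y \<in> V. gdist E x y = N}"

definition in_family :: "'v set \<Rightarrow> ('v \<Rightarrow> 'v \<Rightarrow> bool) \<Rightarrow> nat \<Rightarrow> (real \<Rightarrow> real) \<Rightarrow> bool" where
  "in_family V E nstar \<phi> \<longleftrightarrow> graph_ok V E \<and>
     (\<forall>x\<in>V. \<forall>y\<in>V. x \<noteq> y \<and> deg E x > nstar \<and> deg E y > nstar \<longrightarrow>
        real (gdist E x y) \<ge> \<phi> (real (max (deg E x) (deg E y))))"

end

theory Submission
  imports Defs
begin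

lemma gd_path:
  assumes G: "graph_ok V E" and "x \<in> V" "y \<in> V"
  shows "(E ^^ gdist E x y) x y"
proof -
  have "E\<^sup>*\<^sup>* x y" using G assms unfolding graph_ok_def by blast
  then obtain n where "(E ^^ n) x y" using rtranclp_power by metis
  then show ?thesis unfolding gdist_def by (rule LeastI)
qed

lemma gd_le: "(E ^^ n) x y \<Longrightarrow> gdist E x y \<le> n"
  unfolding gdist_def by (rule Least_le)

lemma gd_self: "gdist E x x = 0"
  using gd_le[where E=E and n=0 and x=x and y=x] by simp

lemma gd_zero:
  assumes G: "graph_ok V E" and "x \<in> V" "y \<in> V" "gdist E x y = 0"
  shows "y = x"
  using gd_path[OF assms(1-3)] assms(4) by simp

lemma gd_tri:
  assumes G: "graph_ok V E" and "x \<in> V" "y \<in> V" "z \<in> V"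
  shows "gdist E x z \<le> gdist E x y + gdist E y z"
  by (rule gd_le[OF relpowp_trans[OF gd_path[OF G assms(2,3)] gd_path[OF G assms(3,4)]]])

lemma gd_parent:
  assumes G: "graph_ok V E" and "x \<in> V" "y \<in> V" "gdist E x y = Suc n"
  shows "\<exists>z. gdist E x z = n \<and> E z y"
proof -
  have "(E ^^ Suc n) x y" using gd_path[OF G assms(2,3)] assms(4) by simp
  then obtain z where z: "(E ^^ n) x z" "E z y" by (rule relpowp_Suc_E)
  have zV: "z \<in> V" using z(2) G unfolding graph_ok_def by blast
  have le: "gdist E x z \<le> n" using gd_le z(1) .
  have "gdist E x y \<le> Suc (gdist E x z)"
    by (rule gd_le[OF relpowp_Suc_I[OF gd_path[OF G assms(2) zV] z(2)]])
  then have "gdist E x z = n" using le assms(4) by simp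
  then show ?thesis using z by blast
qed

lemma gd_child:
  assumes G: "graph_ok V E" and "x \<in> V" "z \<in> V" "E z y"
  shows "gdist E x y \<le> Suc (gdist E x z)"
  by (rule gd_le[OF relpowp_Suc_I[OF gd_path[OF G assms(2,3)] assms(4)]])

lemma sphere_finite:
  assumes G: "graph_ok V E" and x: "x \<in> V"
  shows "finite (sphere V E n x)"
proof (induction n)
  case 0
  have "sphere V E 0 x \<subseteq> {x}" using gd_zero[OF G x] unfolding sphere_def by auto
  then show ?case using finite_subset by blast
next
  case (Suc n)
  have "sphere V E (Suc n) x \<subseteq> (\<Union>z\<in>sphere V E n x. {y. E z y})"
  proof
    fix y assume y: "y \<in> sphere V E (Suc n) x"
    then obtain z where z: "gdist E x z = n" "E z y"
      using gd_parent[OF G x] unfolding sphere_def by blast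
    then have "z \<in> V" using G unfolding graph_ok_def by blast
    then show "y \<in> (\<Union>z\<in>sphere V E n x. {y. E z y})" using z unfolding sphere_def by blast
  qed
  moreover have "finite (\<Union>z\<in>sphere V E n x. {y. E z y})"
    using Suc G unfolding graph_ok_def sphere_def by auto
  ultimately show ?case using finite_subset by blast
qed

lemma deg_pos:
  assumes G: "graph_ok V E" and "E z y"
  shows "deg E z \<ge> 1"
proof -
  have "z \<in> V" using assms unfolding graph_ok_def by blast
  then have "finite {y. E z y}" using G unfolding graph_ok_def by blast
  then show ?thesis unfolding deg_def using assms(2)
    by (metis (mono_tags, lifting) One_nat_def Suc_leI card_gt_0_iff empty_iff mem_Collect_eq)
qed

definition par :: "('v \<Rightarrow> 'v \<Rightarrow> bool) \<Rightarrow> 'v \<Rightarrow> 'v \<Rightarrow> 'v" where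
  "par E x y = (SOME z. gdist E x z = gdist E x y - 1 \<and> E z y)"

lemma par:
  assumes G: "graph_ok V E" and x: "x \<in> V" and y: "y \<in> sphere V E (Suc n) x"
  shows "par E x y \<in> sphere V E n x" "E (par E x y) y"
proof -
  have "\<exists>z. gdist E x z = gdist E x y - 1 \<and> E z y"
    using gd_parent[OF G x] y unfolding sphere_def by auto
  then have h: "gdist E x (par E x y) = gdist E x y - 1 \<and> E (par E x y) y"
    unfolding par_def by (rule someI_ex)
  then show "E (par E x y) y" by simp
  have "par E x y \<in> V" using h G unfolding graph_ok_def by blast
  then show "par E x y \<in> sphere V E n x" using h y unfolding sphere_def by auto
qed

fun Pw :: "('v \<Rightarrow> 'v \<Rightarrow> bool) \<Rightarrow> 'v \<Rightarrow> nat \<Rightarrow> 'v \<Rightarrow> real" where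
  "Pw E x 0 y = 1"
| "Pw E x (Suc n) y = real (deg E (par E x y)) * Pw E x n (par E x y)"

lemma Pw_ge1:
  assumes G: "graph_ok V E" and x: "x \<in> V"
  shows "y \<in> sphere V E n x \<Longrightarrow> Pw E x n y \<ge> 1"
proof (induction n arbitrary: y)
  case 0 then show ?case by simp
next
  case (Suc n)
  have p: "par E x y \<in> sphere V E n x" "E (par E x y) y" using par[OF G x Suc.prems] by auto
  have "real (deg E (par E x y)) \<ge> 1" using deg_pos[OF G p(2)] by simp
  moreover have "Pw E x n (par E x y) \<ge> 1" using Suc.IH p(1) by blast
  ultimately have "1 * 1 \<le> real (deg E (par E x y)) * Pw E x n (par E x y)"
    by (intro mult_mono) auto
  then show ?case by simp
qed

lemma tree_sum:
  assumes G: "graph_ok V E" and x: "x \<in> V"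
  shows "(\<Sum>y\<in>sphere V E n x. 1 / Pw E x n y) \<le> 1"
proof (induction n)
  case 0
  have "sphere V E 0 x \<subseteq> {x}" using gd_zero[OF G x] unfolding sphere_def by auto
  then have "sphere V E 0 x = {} \<or> sphere V E 0 x = {x}" by blast
  then show ?case by auto
next
  case (Suc n)
  let ?S = "sphere V E (Suc n) x" and ?T = "sphere V E n x" and ?p = "par E x"
  have fS: "finite ?S" and fT: "finite ?T" using sphere_finite[OF G x] by auto
  have "(\<Sum>y\<in>?S. 1 / Pw E x (Suc n) y)
      = (\<Sum>y\<in>?S. 1 / (real (deg E (?p y)) * Pw E x n (?p y)))" by simp
  also have "\<dots> = (\<Sum>z\<in>?p ` ?S. \<Sum>y\<in>{y \<in> ?S. ?p y = z}. 1 / (real (deg E (?p y)) * Pw E x n (?p y)))"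
    by (rule sum.image_gen[OF fS])
  also have "\<dots> = (\<Sum>z\<in>?p ` ?S. real (card {y \<in> ?S. ?p y = z}) * (1 / (real (deg E z) * Pw E x n z)))"
    by (intro sum.cong) auto
  also have "\<dots> \<le> (\<Sum>z\<in>?p ` ?S. 1 / Pw E x n z)"
  proof (intro sum_mono)
    fix z assume z: "z \<in> ?p ` ?S"
    then obtain y0 where y0: "y0 \<in> ?S" "z = ?p y0" by blast
    have zT: "z \<in> ?T" and Ez: "E z y0" using par[OF G x y0(1)] y0(2) by auto
    have zV: "z \<in> V" using zT unfolding sphere_def by auto
    have fin: "finite {y. E z y}" using G zV unfolding graph_ok_def by blast
    have "{y \<in> ?S. ?p y = z} \<subseteq> {y. E z y}" using par(2)[OF G x] by blast
    then have c: "card {y \<in> ?S. ?p y = z} \<le> deg E z" unfolding deg_def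
      using card_mono[OF fin] by blast
    have d: "real (deg E z) \<ge> 1" using deg_pos[OF G Ez] by simp
    have P: "Pw E x n z \<ge> 1" using Pw_ge1[OF G x zT] .
    have "real (card {y \<in> ?S. ?p y = z}) * (1 / (real (deg E z) * Pw E x n z))
        \<le> real (deg E z) * (1 / (real (deg E z) * Pw E x n z))"
      using c d P by (intro mult_right_mono) auto
    also have "\<dots> = 1 / Pw E x n z" using d by simp
    finally show "real (card {y \<in> ?S. ?p y = z}) * (1 / (real (deg E z) * Pw E x n z)) \<le> 1 / Pw E x n z" .
  qed
  also have "\<dots> \<le> (\<Sum>z\<in>?T. 1 / Pw E x n z)"
  proof (rule sum_mono2[OF fT])
    show "?p ` ?S \<subseteq> ?T" using par(1)[OF G x] by blast
    show "\<And>z. z \<in> ?T - ?p ` ?S \<Longrightarrow> 0 \<le> 1 / Pw E x n z"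
      using Pw_ge1[OF G x] by (metis DiffD1 dual_order.trans zero_le_divide_1_iff zero_le_one)
  qed
  also have "\<dots> \<le> 1" by (rule Suc.IH)
  finally show ?case .
qed

lemma invariant:
  assumes G: "graph_ok V E" and x: "x \<in> V" and ns: "nstar \<ge> 1"
    and c: "c \<ge> 0" and C0: "C0 \<ge> 0" and D: "D \<ge> 0"
    and pair: "\<And>v w. v \<in> V \<Longrightarrow> w \<in> V \<Longrightarrow> v \<noteq> w \<Longrightarrow> deg E v > nstar \<Longrightarrow> deg E w > nstar
          \<Longrightarrow> real (deg E v) \<le> exp (c * real (gdist E w v))"
    and first: "\<And>v. v \<in> V \<Longrightarrow> deg E v > nstar \<Longrightarrow> real (deg E v) \<le> exp (C0 + c * (real (gdist E x v) + D))"
  shows "y \<in> sphere V E n x \<Longrightarrow>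
     real (deg E y) * Pw E x n y \<le> real nstar ^ (n+1)
   \<or> (\<exists>j w. j \<le> n \<and> w \<in> V \<and> deg E w > nstar \<and> gdist E x w = j \<and> (E ^^ (n - j)) w y \<and>
        real (deg E y) * Pw E x n y \<le> real nstar ^ (n+1) * exp (C0 + c * (real j + D)))"
proof (induction n arbitrary: y)
  case 0
  then have yx: "y = x" using gd_zero[OF G x] unfolding sphere_def by auto
  show ?case
  proof (cases "deg E y > nstar")
    case True
    have f: "real (deg E y) \<le> exp (C0 + c * (real 0 + D))"
      using first[OF x True[unfolded yx]] yx gd_self[of E x] by simp
    have g: "exp (C0 + c * (real 0 + D)) \<le> real nstar * exp (C0 + c * (real 0 + D))"
      using ns by (simp add: mult_le_cancel_right1)
    have "real (deg E y) * Pw E x 0 y \<le> real nstar ^ 1 * exp (C0 + c * (real 0 + D))"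
      using order_trans[OF f g] by simp
    then show ?thesis using True x yx gd_self[of E x] by (intro disjI2 exI[of _ 0] exI[of _ x]) auto
  next
    case False
    then show ?thesis by simp
  qed
next
  case (Suc n)
  let ?z = "par E x y"
  have zT: "?z \<in> sphere V E n x" and Ez: "E ?z y" using par[OF G x Suc.prems] by auto
  have yV: "y \<in> V" and gy: "gdist E x y = Suc n" using Suc.prems unfolding sphere_def by auto
  have eq: "real (deg E y) * Pw E x (Suc n) y = real (deg E y) * (real (deg E ?z) * Pw E x n ?z)"
    by simp
  have nn: "0 \<le> real (deg E ?z) * Pw E x n ?z" using Pw_ge1[OF G x zT] by simp
  have ns0: "real nstar \<ge> 1" using ns by simp
  show ?case
  proof (cases "deg E y > nstar")
    case False
    then have dy: "real (deg E y) \<le> real nstar" by simp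
    from Suc.IH[OF zT] show ?thesis
    proof
      assume a: "real (deg E ?z) * Pw E x n ?z \<le> real nstar ^ (n + 1)"
      have "real (deg E y) * (real (deg E ?z) * Pw E x n ?z) \<le> real nstar * real nstar ^ (n + 1)"
        using mult_mono[OF dy a] nn by simp
      then show ?thesis using eq by simp
    next
      assume "\<exists>j w. j \<le> n \<and> w \<in> V \<and> deg E w > nstar \<and> gdist E x w = j \<and> (E ^^ (n - j)) w ?z \<and>
        real (deg E ?z) * Pw E x n ?z \<le> real nstar ^ (n+1) * exp (C0 + c * (real j + D))"
      then obtain j w where jw: "j \<le> n" "w \<in> V" "deg E w > nstar" "gdist E x w = j" "(E ^^ (n - j)) w ?z"
        "real (deg E ?z) * Pw E x n ?z \<le> real nstar ^ (n+1) * exp (C0 + c * (real j + D))" by blast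
      have path: "(E ^^ (Suc n - j)) w y" using relpowp_Suc_I[OF jw(5) Ez] jw(1) Suc_diff_le by metis
      have "real (deg E y) * (real (deg E ?z) * Pw E x n ?z) \<le> real nstar * (real nstar ^ (n+1) * exp (C0 + c * (real j + D)))"
        using mult_mono[OF dy jw(6)] nn by simp
      then show ?thesis using eq jw path by (intro disjI2 exI[of _ j] exI[of _ w]) auto
    qed
  next
    case True
    have dy0: "real (deg E y) \<ge> 0" by simp
    from Suc.IH[OF zT] show ?thesis
    proof
      assume a: "real (deg E ?z) * Pw E x n ?z \<le> real nstar ^ (n + 1)"
      have f: "real (deg E y) \<le> exp (C0 + c * (real (Suc n) + D))" using first[OF yV True] gy by simp
      have "real (deg E y) * (real (deg E ?z) * Pw E x n ?z) \<le> exp (C0 + c * (real (Suc n) + D)) * real nstar ^ (n + 1)"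
        using mult_mono[OF f a] nn by simp
      also have "\<dots> \<le> exp (C0 + c * (real (Suc n) + D)) * real nstar ^ (Suc n + 1)"
        using ns0 by (intro mult_left_mono power_increasing) auto
      finally show ?thesis using eq True yV gy
        by (intro disjI2 exI[of _ "Suc n"] exI[of _ y]) (auto simp: mult.commute)
    next
      assume "\<exists>j w. j \<le> n \<and> w \<in> V \<and> deg E w > nstar \<and> gdist E x w = j \<and> (E ^^ (n - j)) w ?z \<and>
        real (deg E ?z) * Pw E x n ?z \<le> real nstar ^ (n+1) * exp (C0 + c * (real j + D))"
      then obtain j w where jw: "j \<le> n" "w \<in> V" "deg E w > nstar" "gdist E x w = j" "(E ^^ (n - j)) w ?z"
        "real (deg E ?z) * Pw E x n ?z \<le> real nstar ^ (n+1) * exp (C0 + c * (real j + D))" by blast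
      have path: "(E ^^ (Suc n - j)) w y" using relpowp_Suc_I[OF jw(5) Ez] jw(1) Suc_diff_le by metis
      have wy: "w \<noteq> y" using jw(1,4) gy by auto
      have "gdist E w y \<le> Suc n - j" using gd_le[OF path] .
      then have gl: "real (gdist E w y) \<le> real (Suc n) - real j" using jw(1) by linarith
      have "real (deg E y) \<le> exp (c * real (gdist E w y))" using pair[OF yV jw(2) wy[symmetric] True jw(3)] .
      also have "\<dots> \<le> exp (c * (real (Suc n) - real j))" using gl c by (simp add: mult_left_mono)
      finally have f: "real (deg E y) \<le> exp (c * (real (Suc n) - real j))" .
      have "real (deg E y) * (real (deg E ?z) * Pw E x n ?z) \<le> exp (c * (real (Suc n) - real j)) * (real nstar ^ (n+1) * exp (C0 + c * (real j + D)))"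
        using mult_mono[OF f jw(6)] nn by simp
      also have "\<dots> = real nstar ^ (n+1) * exp (C0 + c * (real (Suc n) + D))"
        by (simp add: exp_add[symmetric] algebra_simps)
      also have "\<dots> \<le> real nstar ^ (Suc n + 1) * exp (C0 + c * (real (Suc n) + D))"
        using ns0 by (intro mult_right_mono power_increasing) auto
      finally show ?thesis using eq True yV gy
        by (intro disjI2 exI[of _ "Suc n"] exI[of _ y]) auto
    qed
  qed
qed

lemma sum_bound:
  assumes G: "graph_ok V E" and x: "x \<in> V" and ns: "nstar \<ge> 1"
    and c: "c \<ge> 0" and C0: "C0 \<ge> 0" and D: "D \<ge> 0" and th: "\<theta> > 0"
    and pair: "\<And>v w. v \<in> V \<Longrightarrow> w \<in> V \<Longrightarrow> v \<noteq> w \<Longrightarrow> deg E v > nstar \<Longrightarrow> deg E w > nstar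
          \<Longrightarrow> real (deg E v) \<le> exp (c * real (gdist E w v))"
    and first: "\<And>v. v \<in> V \<Longrightarrow> deg E v > nstar \<Longrightarrow> real (deg E v) \<le> exp (C0 + c * (real (gdist E x v) + D))"
  shows "(\<Sum>y\<in>sphere V E N x. real (deg E y) powr (1 + \<theta>))
     \<le> (real nstar ^ (N+1) * exp (C0 + c * (real N + D))) powr (1 + \<theta>)"
proof -
  define B where "B = real nstar ^ (N+1) * exp (C0 + c * (real N + D))"
  have ns0: "real nstar \<ge> 1" using ns by simp
  have Bpos: "B > 0" unfolding B_def using ns0 by simp
  have e1: "exp (C0 + c * (real N + D)) \<ge> 1" using c C0 D by simp
  have fS: "finite (sphere V E N x)" using sphere_finite[OF G x] .
  have key: "real (deg E y) * Pw E x N y \<le> B" if y: "y \<in> sphere V E N x" for y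
  proof -
    from invariant[OF G x ns c C0 D pair first y] show ?thesis
    proof
      assume a: "real (deg E y) * Pw E x N y \<le> real nstar ^ (N + 1)"
      have "real nstar ^ (N + 1) * 1 \<le> B" unfolding B_def
        using e1 ns0 by (intro mult_left_mono) auto
      then show ?thesis using a by simp
    next
      assume "\<exists>j w. j \<le> N \<and> w \<in> V \<and> deg E w > nstar \<and> gdist E x w = j \<and> (E ^^ (N - j)) w y \<and>
        real (deg E y) * Pw E x N y \<le> real nstar ^ (N+1) * exp (C0 + c * (real j + D))"
      then obtain j where j: "j \<le> N" "real (deg E y) * Pw E x N y \<le> real nstar ^ (N+1) * exp (C0 + c * (real j + D))"
        by blast
      have "exp (C0 + c * (real j + D)) \<le> exp (C0 + c * (real N + D))"
        using j(1) c by (simp add: mult_left_mono)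
      then have "real nstar ^ (N+1) * exp (C0 + c * (real j + D)) \<le> B" unfolding B_def
        using ns0 by (intro mult_left_mono) auto
      then show ?thesis using j(2) by simp
    qed
  qed
  have degB: "real (deg E y) \<le> B" if y: "y \<in> sphere V E N x" for y
  proof -
    have P: "Pw E x N y \<ge> 1" using Pw_ge1[OF G x y] .
    have "real (deg E y) * 1 \<le> real (deg E y) * Pw E x N y"
      using P by (intro mult_left_mono) auto
    then show ?thesis using key[OF y] by simp
  qed
  have sdeg: "(\<Sum>y\<in>sphere V E N x. real (deg E y)) \<le> B"
  proof -
    have "(\<Sum>y\<in>sphere V E N x. real (deg E y)) \<le> (\<Sum>y\<in>sphere V E N x. B * (1 / Pw E x N y))"
    proof (rule sum_mono)
      fix y assume y: "y \<in> sphere V E N x"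
      have P: "Pw E x N y \<ge> 1" using Pw_ge1[OF G x y] .
      have "real (deg E y) = (real (deg E y) * Pw E x N y) / Pw E x N y" using P by simp
      also have "\<dots> \<le> B / Pw E x N y" using key[OF y] P by (intro divide_right_mono) auto
      finally show "real (deg E y) \<le> B * (1 / Pw E x N y)" by simp
    qed
    also have "\<dots> = B * (\<Sum>y\<in>sphere V E N x. 1 / Pw E x N y)" by (simp add: sum_distrib_left)
    also have "\<dots> \<le> B * 1" using tree_sum[OF G x] Bpos by (intro mult_left_mono) auto
    finally show ?thesis by simp
  qed
  have "(\<Sum>y\<in>sphere V E N x. real (deg E y) powr (1 + \<theta>))
      \<le> (\<Sum>y\<in>sphere V E N x. real (deg E y) * B powr \<theta>)"
  proof (rule sum_mono)
    fix y assume y: "y \<in> sphere V E N x"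
    have "real (deg E y) powr (1 + \<theta>) = real (deg E y) * real (deg E y) powr \<theta>"
      by (simp add: powr_add)
    also have "\<dots> \<le> real (deg E y) * B powr \<theta>"
      using degB[OF y] th by (intro mult_left_mono powr_mono2) auto
    finally show "real (deg E y) powr (1 + \<theta>) \<le> real (deg E y) * B powr \<theta>" .
  qed
  also have "\<dots> = (\<Sum>y\<in>sphere V E N x. real (deg E y)) * B powr \<theta>" by (simp add: sum_distrib_right)
  also have "\<dots> \<le> B * B powr \<theta>" using sdeg by (intro mult_right_mono) auto
  also have "\<dots> = B powr (1 + \<theta>)" using Bpos by (simp add: powr_add)
  finally show ?thesis unfolding B_def .
qed

lemma first_bound:
  assumes G: "graph_ok V E" and x: "x \<in> V" and c: "c \<ge> 0"
    and pair: "\<And>v w. v \<in> V \<Longrightarrow> w \<in> V \<Longrightarrow> v \<noteq> w \<Longrightarrow> deg E v > nstar \<Longrightarrow> deg E w > nstar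
          \<Longrightarrow> real (deg E v) \<le> exp (c * real (gdist E w v))"
  shows "\<exists>C0 D. C0 \<ge> 0 \<and> D \<ge> 0 \<and> (\<forall>v. v \<in> V \<longrightarrow> deg E v > nstar \<longrightarrow>
           real (deg E v) \<le> exp (C0 + c * (real (gdist E x v) + D)))"
proof (cases "\<exists>w\<in>V. deg E w > nstar")
  case False
  then show ?thesis by (intro exI[of _ 0]) auto
next
  case True
  then obtain w where w: "w \<in> V" "deg E w > nstar" by blast
  define C0 where "C0 = ln (real (deg E w))"
  define D where "D = real (gdist E w x)"
  have dw: "real (deg E w) > 0" using w(2) by simp
  have C0: "C0 \<ge> 0" unfolding C0_def using w(2) by simp
  have D: "D \<ge> 0" unfolding D_def by simp
  have bnd: "real (deg E v) \<le> exp (C0 + c * (real (gdist E x v) + D))" if v: "v \<in> V" "deg E v > nstar" for v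
  proof (cases "v = w")
    case True
    have "real (deg E v) = exp C0" unfolding C0_def using True dw by simp
    also have "\<dots> \<le> exp (C0 + c * (real (gdist E x v) + D))" using c D by simp
    finally show ?thesis .
  next
    case False
    have "real (deg E v) \<le> exp (c * real (gdist E w v))" using pair[OF v(1) w(1) False v(2) w(2)] .
    also have "\<dots> \<le> exp (c * (real (gdist E x v) + D))"
    proof -
      have "gdist E w v \<le> gdist E w x + gdist E x v" using gd_tri[OF G w(1) x v(1)] .
      then have "real (gdist E w v) \<le> real (gdist E x v) + D" unfolding D_def by linarith
      then show ?thesis using c by (simp add: mult_left_mono)
    qed
    also have "\<dots> \<le> exp (C0 + c * (real (gdist E x v) + D))" using C0 by simp
    finally show ?thesis .
  qed
  show ?thesis
    apply (rule exI[of _ C0], rule exI[of _ D])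
    using C0 D bnd by auto
qed

lemma pair_bound:
  fixes nstar :: nat and \<upsilon> \<epsilon> :: real
  assumes F: "in_family V E nstar (\<lambda>b. \<upsilon> * ln b * (ln (ln b)) powr (1 + \<epsilon>))"
    and ns: "nstar > 2" and u: "\<upsilon> > 0" and e: "\<epsilon> > 0"
    and v: "v \<in> V" and w: "w \<in> V" and vw: "v \<noteq> w" and hv: "deg E v > nstar" and hw: "deg E w > nstar"
  shows "real (deg E v) \<le> exp ((1 / (\<upsilon> * ln (ln (real nstar + 1)) powr (1 + \<epsilon>))) * real (gdist E w v))"
proof -
  define L0 where "L0 = ln (ln (real nstar + 1)) powr (1 + \<epsilon>)"
  have e3: "exp 1 \<le> (3::real)" by (rule exp_le)
  have n4: "real nstar + 1 \<ge> 4" using ns by linarith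
  have ex: "exp 1 < real nstar + 1" using e3 n4 by linarith
  have "ln (exp 1) < ln (real nstar + 1)"
    using ln_less_cancel_iff[of "exp 1" "real nstar + 1"] ex by simp
  then have l1: "1 < ln (real nstar + 1)" by simp
  then have ll0: "ln (ln (real nstar + 1)) > 0" by (rule ln_gt_zero)
  have L0: "L0 > 0" unfolding L0_def using ll0 by simp
  define b where "b = real (max (deg E w) (deg E v))"
  have hyp: "real (gdist E w v) \<ge> \<upsilon> * ln b * (ln (ln b)) powr (1 + \<epsilon>)"
    using F w v vw hv hw unfolding in_family_def b_def by auto
  have bv: "real (deg E v) \<le> b" unfolding b_def by simp
  have bn: "real nstar + 1 \<le> b" unfolding b_def using hv by linarith
  have lb: "ln (real nstar + 1) \<le> ln b" using bn by simp
  then have lb1: "ln b > 1" using l1 by simp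
  have "ln (ln (real nstar + 1)) \<le> ln (ln b)" using lb l1 ns by (subst ln_le_cancel_iff) auto
  then have "L0 \<le> (ln (ln b)) powr (1 + \<epsilon>)" unfolding L0_def using ll0 e
    by (intro powr_mono2) auto
  then have "\<upsilon> * ln b * L0 \<le> \<upsilon> * ln b * (ln (ln b)) powr (1 + \<epsilon>)"
    using u lb1 by (intro mult_left_mono) auto
  then have g: "(\<upsilon> * L0) * ln b \<le> real (gdist E w v)" using hyp by (simp add: mult_ac)
  have c0: "\<upsilon> * L0 > 0" using u L0 by simp
  have "ln (real (deg E v)) \<le> ln b" using bv hv by (subst ln_le_cancel_iff) auto
  also have "\<dots> \<le> (1 / (\<upsilon> * L0)) * real (gdist E w v)"
    using g c0 by (simp add: field_simps)
  finally have "ln (real (deg E v)) \<le> (1 / (\<upsilon> * L0)) * real (gdist E w v)" .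
  then have "exp (ln (real (deg E v))) \<le> exp ((1 / (\<upsilon> * L0)) * real (gdist E w v))" by simp
  moreover have "exp (ln (real (deg E v))) = real (deg E v)" using hv by simp
  ultimately show ?thesis unfolding L0_def by simp
qed

theorem lemma5p4:
  fixes nstar :: nat and \<upsilon> \<epsilon> :: real
  assumes "nstar > 2" and "\<upsilon> > 0" and "\<epsilon> > 0"
    and "\<upsilon> * ln (real nstar + 1) * (ln (ln (real nstar + 1))) powr (1 + \<epsilon>) > 1"
  shows "\<forall>\<theta>>0. \<exists>a>0. \<forall>(V :: nat set) E.
           in_family V E nstar (\<lambda>b. \<upsilon> * ln b * (ln (ln b)) powr (1 + \<epsilon>)) \<longrightarrow>
           (\<forall>x\<in>V. \<exists>Nx. \<forall>N\<ge>Nx.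
              (\<Sum>y\<in>sphere V E N x. real (deg E y) powr (1 + \<theta>)) \<le> exp (a * real N))"
proof (intro allI impI)
  fix \<theta> :: real assume th: "\<theta> > 0"
  define c where "c = 1 / (\<upsilon> * ln (ln (real nstar + 1)) powr (1 + \<epsilon>))"
  have c: "c \<ge> 0" unfolding c_def using assms(2) by simp
  have ns: "nstar \<ge> 1" using assms(1) by simp
  have lns: "ln (real nstar) \<ge> 0" using ns by simp
  define a where "a = (1 + \<theta>) * (ln (real nstar) + c + 1)"
  have apos: "a > 0" unfolding a_def using th c lns by (intro mult_pos_pos) auto
  show "\<exists>a>0. \<forall>(V :: nat set) E.
           in_family V E nstar (\<lambda>b. \<upsilon> * ln b * (ln (ln b)) powr (1 + \<epsilon>)) \<longrightarrow>
           (\<forall>x\<in>V. \<exists>Nx. \<forall>N\<ge>Nx.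
              (\<Sum>y\<in>sphere V E N x. real (deg E y) powr (1 + \<theta>)) \<le> exp (a * real N))"
  proof (intro exI[of _ a] conjI apos allI impI ballI)
    fix V :: "nat set" and E x
    assume F: "in_family V E nstar (\<lambda>b. \<upsilon> * ln b * (ln (ln b)) powr (1 + \<epsilon>))" and x: "x \<in> V"
    have G: "graph_ok V E" using F unfolding in_family_def by simp
    have pair: "\<And>v w. v \<in> V \<Longrightarrow> w \<in> V \<Longrightarrow> v \<noteq> w \<Longrightarrow> deg E v > nstar \<Longrightarrow> deg E w > nstar
          \<Longrightarrow> real (deg E v) \<le> exp (c * real (gdist E w v))"
      unfolding c_def by (rule pair_bound[OF F assms(1-3)])
    obtain C0 D where CD: "C0 \<ge> 0" "D \<ge> 0"
      "\<And>v. v \<in> V \<Longrightarrow> deg E v > nstar \<Longrightarrow> real (deg E v) \<le> exp (C0 + c * (real (gdist E x v) + D))"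
      using first_bound[OF G x c pair] by blast
    show "\<exists>Nx. \<forall>N\<ge>Nx. (\<Sum>y\<in>sphere V E N x. real (deg E y) powr (1 + \<theta>)) \<le> exp (a * real N)"
    proof (intro exI[of _ "nat \<lceil>ln (real nstar) + C0 + c * D\<rceil>"] allI impI)
      fix N assume N: "nat \<lceil>ln (real nstar) + C0 + c * D\<rceil> \<le> N"
      then have NK: "ln (real nstar) + C0 + c * D \<le> real N" by linarith
      define B where "B = real nstar ^ (N+1) * exp (C0 + c * (real N + D))"
      have npos: "real nstar > 0" using ns by simp
      have Bpos: "B > 0" unfolding B_def using npos by simp
      have lnB: "ln B = real (N+1) * ln (real nstar) + (C0 + c * (real N + D))"
      proof -
        have "ln B = ln (real nstar ^ (N+1)) + ln (exp (C0 + c * (real N + D)))"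
          unfolding B_def using npos by (simp add: ln_mult)
        also have "ln (real nstar ^ (N+1)) = real (N+1) * ln (real nstar)"
          by (rule ln_realpow)
        finally show ?thesis by simp
      qed
      have "(\<Sum>y\<in>sphere V E N x. real (deg E y) powr (1 + \<theta>)) \<le> B powr (1 + \<theta>)"
        unfolding B_def by (rule sum_bound[OF G x ns c CD(1) CD(2) th pair CD(3)])
      also have "\<dots> = exp ((1 + \<theta>) * ln B)" using Bpos by (simp add: powr_def)
      also have "\<dots> \<le> exp (a * real N)"
      proof -
        have "ln B \<le> (ln (real nstar) + c + 1) * real N"
        proof -
          have e1: "real (N+1) * ln (real nstar) = real N * ln (real nstar) + ln (real nstar)"
            by (simp add: distrib_right)
          have e2: "c * (real N + D) = c * real N + c * D" by (simp add: distrib_left)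
          have e3: "(ln (real nstar) + c + 1) * real N = ln (real nstar) * real N + c * real N + real N"
            by (simp add: distrib_right)
          show ?thesis unfolding lnB e1 e2 e3 using NK by (simp add: mult.commute)
        qed
        then have "(1 + \<theta>) * ln B \<le> (1 + \<theta>) * ((ln (real nstar) + c + 1) * real N)"
          using th by (intro mult_left_mono) auto
        then show ?thesis unfolding a_def by (simp add: mult_ac)
      qed
      finally show "(\<Sum>y\<in>sphere V E N x. real (deg E y) powr (1 + \<theta>)) \<le> exp (a * real N)" .
    qed
  qed
qed

end
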